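(* Under the standing assumptions, let $\{x_i\}_{i=1}^N$ be a solution of the delayed Hegselmann–Krause system. Then for every $v\in\mathbb{R}^d$, every $T\ge 0$, every $i=1,\dots,N$ and every $t\ge T-\bar\tau$, $$\min_{j=1,\dots,N}\min_{s\in[T-\bar\tau,T]}\langle x_j(s),v\rangle\le\langle x_i(t),v\rangle\le\max_{j=1,\dots,N}\max_{s\in[T-\bar\tau,T]}\langle x_j(s),v\rangle.$$
   Context: Standing assumptions: $N\ge 2$, $d\ge 1$, $\bar\tau>0$; $\tau:[0,\infty)\to[0,\bar\tau]$ continuous; $\psi:\mathbb{R}^d\times\mathbb{R}^d\to\mathbb{R}$ continuous, bounded and strictly positive, $K:=\|\psi\|_\infty$; initial data $x_i^0:[-\bar\tau,0]\to\mathbb{R}^d$ continuous. The delayed Hegselmann–Krause system is $$\frac{d}{dt}x_i(t)=\frac{1}{N-1}\sum_{j\ne i}\psi\big(x_i(t),x_j(t-\tau(t))\big)\big(x_j(t-\tau(t))-x_i(t)\big),\quad t>0,$$ with $x_i=x_i^0$ on $[-\bar\tau,0]$; a solution means continuous $x_i:[-\bar\tau,\infty)\to\mathbb{R}^d$, differentiable on $(0,\infty)$, satisfying this. $\langle\cdot,\cdot\rangle$ is the Euclidean inner product. *)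

theory Defs
  imports "HOL-Analysis.Analysis"
begin

text \<open>Agents are indexed by j < N (i.e. 0..N-1 instead of 1..N); positions live in a
Euclidean space 'a (playing the role of R^d).  x j t is the position of agent j at time t.\<close>

definition delayed_HK_rhs ::
  "nat \<Rightarrow> ('a::euclidean_space \<Rightarrow> 'a \<Rightarrow> real) \<Rightarrow> (real \<Rightarrow> real) \<Rightarrow>
   (nat \<Rightarrow> real \<Rightarrow> 'a) \<Rightarrow> nat \<Rightarrow> real \<Rightarrow> 'a" where
  "delayed_HK_rhs N \<psi> \<tau> x i t =
     (1 / (real N - 1)) *\<^sub>R
       (\<Sum>j\<in>{..<N} - {i}. \<psi> (x i t) (x j (t - \<tau> t)) *\<^sub>R (x j (t - \<tau> t) - x i t))"

definition is_delayed_HK_solution ::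
  "nat \<Rightarrow> real \<Rightarrow> (real \<Rightarrow> real) \<Rightarrow> ('a::euclidean_space \<Rightarrow> 'a \<Rightarrow> real) \<Rightarrow>
   (nat \<Rightarrow> real \<Rightarrow> 'a) \<Rightarrow> (nat \<Rightarrow> real \<Rightarrow> 'a) \<Rightarrow> bool" where
  "is_delayed_HK_solution N taubar \<tau> \<psi> x0 x \<longleftrightarrow>
     (\<forall>i<N. continuous_on {-taubar..} (x i)
        \<and> (\<forall>t\<in>{-taubar..0}. x i t = x0 i t)
        \<and> (\<forall>t>0. (x i has_vector_derivative delayed_HK_rhs N \<psi> \<tau> x i t) (at t)))"

end

theory Submission
  imports Defs
begin

lemma strict_aux:
  fixes N :: nat and taubar :: real and \<tau> :: "real \<Rightarrow> real"
    and \<psi> :: "'a::euclidean_space \<Rightarrow> 'a \<Rightarrow> real"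
    and x0 x :: "nat \<Rightarrow> real \<Rightarrow> 'a"
  assumes N: "N \<ge> 2"
    and taubar: "taubar > 0"
    and tau_range: "\<And>t. t \<ge> 0 \<Longrightarrow> 0 \<le> \<tau> t \<and> \<tau> t \<le> taubar"
    and psi_pos: "\<And>y z. \<psi> y z > 0"
    and sol: "is_delayed_HK_solution N taubar \<tau> \<psi> x0 x"
    and T: "T \<ge> 0"
    and hyp: "\<And>j s. j < N \<Longrightarrow> T - taubar \<le> s \<Longrightarrow> s \<le> T \<Longrightarrow> x j s \<bullet> v \<le> m"
    and eps: "\<epsilon> > 0"
  shows "\<forall>i<N. \<forall>t\<ge>T-taubar. x i t \<bullet> v < m + \<epsilon> * (t - T + taubar + 1)"
proof (rule ccontr)
  define B where "B t = m + \<epsilon> * (t - T + taubar + 1)" for t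
  define f where "f j t = x j t \<bullet> v" for j t
  define S where "S = (\<Union>j\<in>{..<N}. {t \<in> {T-taubar..}. B t \<le> f j t})"
  assume "\<not> ?thesis"
  then have ne: "S \<noteq> {}" by (auto simp: S_def f_def B_def not_less)
  have bdd: "bdd_below S" unfolding bdd_below_def S_def by (rule exI[of _ "T-taubar"]) auto
  have cont: "continuous_on {T-taubar..} (f j)" if "j < N" for j
  proof -
    have "continuous_on {-taubar..} (x j)" using sol that unfolding is_delayed_HK_solution_def by auto
    then have "continuous_on {T-taubar..} (x j)" by (rule continuous_on_subset) (use T in auto)
    then show ?thesis unfolding f_def by (intro continuous_intros)
  qed
  have contB: "continuous_on {T-taubar..} B" unfolding B_def by (intro continuous_intros)
  have closed: "closed S" unfolding S_def
    by (intro closed_UN finite_lessThan ballI continuous_on_closed_Collect_le cont contB closed_atLeast) auto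
  define ts where "ts = Inf S"
  have tsS: "ts \<in> S" unfolding ts_def by (rule closed_contains_Inf[OF ne bdd closed])
  have below: "f j t < B t" if "T-taubar \<le> t" "t < ts" "j < N" for t j
  proof (rule ccontr)
    assume "\<not> f j t < B t"
    then have "t \<in> S" using that unfolding S_def by force
    then have "ts \<le> t" unfolding ts_def by (rule cInf_lower[OF _ bdd])
    then show False using that by simp
  qed
  obtain j0 where j0: "j0 < N" "B ts \<le> f j0 ts" and ts1: "ts \<ge> T - taubar" using tsS unfolding S_def by auto
  have tsT: "ts > T"
  proof (rule ccontr)
    assume "\<not> T < ts"
    then have "f j0 ts \<le> m" using hyp[OF j0(1) ts1] by (simp add: f_def)
    moreover have "B ts \<ge> m + \<epsilon>" unfolding B_def using ts1 eps
      by (simp add: mult_le_cancel_left1)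
    ultimately show False using j0 eps by linarith
  qed
  define Mx where "Mx = Max ((\<lambda>j. f j ts) ` {..<N})"
  have "Mx \<in> (\<lambda>j. f j ts) ` {..<N}" unfolding Mx_def using N by (intro Max_in) (auto simp: lessThan_empty_iff)
  then obtain i where i: "i < N" "f i ts = Mx" by auto
  have imax: "f j ts \<le> f i ts" if "j < N" for j
    unfolding i(2) Mx_def using that by (intro Max_ge) auto
  have fi: "B ts \<le> f i ts" using imax[OF j0(1)] j0(2) by simp
  define D where "D = delayed_HK_rhs N \<psi> \<tau> x i ts"
  have dv: "(x i has_vector_derivative D) (at ts)" using sol i(1) tsT T unfolding is_delayed_HK_solution_def D_def by auto
  have "((\<lambda>t. x i t \<bullet> v) has_derivative (\<lambda>h. (h *\<^sub>R D) \<bullet> v)) (at ts)"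
    using bounded_linear.has_derivative[OF bounded_linear_inner_left dv[unfolded has_vector_derivative_def]] .
  moreover have "(\<lambda>h. (h *\<^sub>R D) \<bullet> v) = (*) (D \<bullet> v)" by (auto simp: fun_eq_iff)
  ultimately have df: "(f i has_real_derivative (D \<bullet> v)) (at ts)"
    unfolding has_field_derivative_def f_def by simp
  have dB: "(B has_real_derivative \<epsilon>) (at ts)" unfolding B_def
    by (auto intro!: derivative_eq_intros)
  have Dle: "D \<bullet> v \<le> 0"
  proof -
    define s where "s = ts - \<tau> ts"
    have s1: "T - taubar \<le> s" "s \<le> ts" using tau_range[of ts] tsT T unfolding s_def by auto
    have trm: "\<psi> (x i ts) (x j s) * ((x j s - x i ts) \<bullet> v) \<le> 0" if "j < N" for j
    proof -
      have "f j s \<le> f i ts"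
      proof (cases "s < ts")
        case True
        have "B s \<le> B ts" unfolding B_def using s1 eps by (simp add: mult_left_mono)
        then show ?thesis using below[OF s1(1) True that] fi by linarith
      next
        case False
        then have "s = ts" using s1 by simp
        then show ?thesis using imax[OF that] by simp
      qed
      then have "(x j s - x i ts) \<bullet> v \<le> 0" by (simp add: f_def inner_diff_left)
      then show ?thesis using psi_pos[of "x i ts" "x j s"] by (simp add: mult_nonneg_nonpos)
    qed
    have "D \<bullet> v = (1 / (real N - 1)) * (\<Sum>j\<in>{..<N} - {i}. \<psi> (x i ts) (x j s) * ((x j s - x i ts) \<bullet> v))"
      unfolding D_def delayed_HK_rhs_def s_def by (simp add: inner_sum_left)
    also have "\<dots> \<le> 0"
    proof (rule mult_nonneg_nonpos)
      show "0 \<le> 1 / (real N - 1)" using N by simp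
      show "(\<Sum>j\<in>{..<N} - {i}. \<psi> (x i ts) (x j s) * ((x j s - x i ts) \<bullet> v)) \<le> 0"
        by (rule sum_nonpos) (use trm in auto)
    qed
    finally show ?thesis .
  qed
  have "((\<lambda>t. f i t - B t) has_real_derivative (D \<bullet> v - \<epsilon>)) (at ts)"
    by (intro DERIV_diff df dB)
  moreover have "D \<bullet> v - \<epsilon> < 0" using Dle eps by simp
  ultimately obtain d where d: "d > 0" "\<And>h. h > 0 \<Longrightarrow> h < d \<Longrightarrow> f i ts - B ts < f i (ts - h) - B (ts - h)"
    using DERIV_neg_dec_left by blast
  define h where "h = min d (ts - T) / 2"
  have h: "h > 0" "h < d" "h < ts - T" using d tsT unfolding h_def by auto
  have "f i (ts - h) < B (ts - h)" using below[OF _ _ i(1), of "ts - h"] h taubar by simp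
  then show False using d(2)[OF h(1,2)] fi by linarith
qed

lemma bound_aux:
  fixes N :: nat and taubar :: real and \<tau> :: "real \<Rightarrow> real"
    and \<psi> :: "'a::euclidean_space \<Rightarrow> 'a \<Rightarrow> real"
    and x0 x :: "nat \<Rightarrow> real \<Rightarrow> 'a"
  assumes N: "N \<ge> 2"
    and taubar: "taubar > 0"
    and tau_range: "\<And>t. t \<ge> 0 \<Longrightarrow> 0 \<le> \<tau> t \<and> \<tau> t \<le> taubar"
    and psi_pos: "\<And>y z. \<psi> y z > 0"
    and sol: "is_delayed_HK_solution N taubar \<tau> \<psi> x0 x"
    and T: "T \<ge> 0"
    and hyp: "\<And>j s. j < N \<Longrightarrow> T - taubar \<le> s \<Longrightarrow> s \<le> T \<Longrightarrow> x j s \<bullet> v \<le> m"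
    and i: "i < N" and t: "t \<ge> T - taubar"
  shows "x i t \<bullet> v \<le> m"
proof (rule field_le_epsilon)
  fix e :: real assume e: "e > 0"
  define c where "c = t - T + taubar + 1"
  have c: "c \<ge> 1" using t unfolding c_def by simp
  have ec: "e / c > 0" using e c by simp
  have "x i t \<bullet> v < m + (e / c) * (t - T + taubar + 1)"
    using strict_aux[OF N taubar tau_range psi_pos sol T hyp ec] i t by blast
  also have "\<dots> = m + e" using c unfolding c_def by simp
  finally show "x i t \<bullet> v \<le> m + e" by simp
qed

theorem lemma2p1:
  fixes N :: nat and taubar :: real and \<tau> :: "real \<Rightarrow> real"
    and \<psi> :: "'a::euclidean_space \<Rightarrow> 'a \<Rightarrow> real"
    and x0 x :: "nat \<Rightarrow> real \<Rightarrow> 'a"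
  assumes N: "N \<ge> 2"
    and taubar: "taubar > 0"
    and tau_cont: "continuous_on {0..} \<tau>"
    and tau_range: "\<And>t. t \<ge> 0 \<Longrightarrow> 0 \<le> \<tau> t \<and> \<tau> t \<le> taubar"
    and psi_cont: "continuous_on UNIV (\<lambda>(y, z). \<psi> y z)"
    and psi_bdd: "bounded (range (\<lambda>(y, z). \<psi> y z))"
    and psi_pos: "\<And>y z. \<psi> y z > 0"
    and x0_cont: "\<And>i. i < N \<Longrightarrow> continuous_on {-taubar..0} (x0 i)"
    and sol: "is_delayed_HK_solution N taubar \<tau> \<psi> x0 x"
    and T: "T \<ge> 0"
    and i: "i < N"
    and t: "t \<ge> T - taubar"
  shows "(INF j\<in>{..<N}. INF s\<in>{T - taubar..T}. x j s \<bullet> v) \<le> x i t \<bullet> v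
       \<and> x i t \<bullet> v \<le> (SUP j\<in>{..<N}. SUP s\<in>{T - taubar..T}. x j s \<bullet> v)"
proof -
  define g where "g j s = x j s \<bullet> v" for j s
  have cmp: "compact (g j ` {T - taubar..T})" if "j < N" for j
  proof -
    have "continuous_on {-taubar..} (x j)" using sol that unfolding is_delayed_HK_solution_def by auto
    then have "continuous_on {T - taubar..T} (x j)" by (rule continuous_on_subset) (use T in auto)
    then have "continuous_on {T - taubar..T} (g j)" unfolding g_def by (intro continuous_intros)
    then show ?thesis by (rule compact_continuous_image) simp
  qed
  have ba: "bdd_above (g j ` {T - taubar..T})" "bdd_below (g j ` {T - taubar..T})" if "j < N" for j
    using cmp[OF that] by (auto intro: bounded_imp_bdd_above bounded_imp_bdd_below compact_imp_bounded)
  have fa: "bdd_above ((\<lambda>j. SUP s\<in>{T - taubar..T}. g j s) ` {..<N})"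
    "bdd_below ((\<lambda>j. INF s\<in>{T - taubar..T}. g j s) ` {..<N})"
    by (auto intro: bdd_above_finite bdd_below_finite)
  have up: "x j s \<bullet> v \<le> (SUP j\<in>{..<N}. SUP s\<in>{T - taubar..T}. x j s \<bullet> v)"
    if "j < N" "T - taubar \<le> s" "s \<le> T" for j s
  proof -
    have "g j s \<le> (SUP s\<in>{T - taubar..T}. g j s)" using that by (intro cSUP_upper ba) auto
    also have "\<dots> \<le> (SUP j\<in>{..<N}. SUP s\<in>{T - taubar..T}. g j s)" using that fa by (intro cSUP_upper) auto
    finally show ?thesis unfolding g_def .
  qed
  have lo: "x j s \<bullet> (- v) \<le> - (INF j\<in>{..<N}. INF s\<in>{T - taubar..T}. x j s \<bullet> v)"
    if "j < N" "T - taubar \<le> s" "s \<le> T" for j s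
  proof -
    have "(INF j\<in>{..<N}. INF s\<in>{T - taubar..T}. g j s) \<le> (INF s\<in>{T - taubar..T}. g j s)"
      using that fa by (intro cINF_lower) auto
    also have "\<dots> \<le> g j s" using that by (intro cINF_lower ba) auto
    finally show ?thesis unfolding g_def by simp
  qed
  have "x i t \<bullet> v \<le> (SUP j\<in>{..<N}. SUP s\<in>{T - taubar..T}. x j s \<bullet> v)"
    by (rule bound_aux[OF N taubar tau_range psi_pos sol T up i t])
  moreover have "x i t \<bullet> (- v) \<le> - (INF j\<in>{..<N}. INF s\<in>{T - taubar..T}. x j s \<bullet> v)"
    by (rule bound_aux[OF N taubar tau_range psi_pos sol T lo i t])
  ultimately show ?thesis by simp
qed

end
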